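(* Let $M$ be a connected matroid on $[n]$, $\mathcal G$ a building set of $\mathcal L_M$, and $\mathcal S$ a nested set of $\mathcal G$ with $[n]\in\mathcal S$. For $G\in\mathcal S$ let $G^-$ be the join (closure of the union) of the maximal elements of $\{H\in\mathcal S: H\subsetneq G\}$, with $G^-=\emptyset$ if this set is empty. Let $w$ be any vector in the relative interior of the cone $\mathbb R_{\ge0}\{v_G:G\in\mathcal S\}$. Then $$M_w\;=\;\bigoplus_{G\in\mathcal S} M[G^-,G].$$
   Context: A matroid $M$ of rank $r$ on $[n]$ is given by its bases; for $w\in\mathbb R^n$, $M_w$ is the matroid on $[n]$ whose bases are the bases $\sigma$ of $M$ maximizing $\sum_{i\in\sigma}w_i$. $\mathcal L_M$ is the lattice of flats (least element $\emptyset$ as $M$ is connected hence loopless, greatest $[n]$). For flats $F\subseteq G$, $M[F,G]$ is the matroid on $G\setminus F$ obtained by restricting $M$ to $G$ and contracting $F$: its bases are the sets $\tau\setminus F$ where $\tau\subseteq G$ is a maximal independent subset of $G$ containing a maximal independent subset of $F$. $v_G\in\{0,1\}^n$ is the incidence vector of $G$. $\mathcal G\subseteq\mathcal L_M\setminus\{\emptyset\}$ is a building set if for every flat $X\ne\emptyset$, with $G_1,\dots,G_k$ the maximal elements of $\mathcal G$ contained in $X$, the join map $\prod_j[\emptyset,G_j]\to[\emptyset,X]$ is a poset isomorphism ($[A,B]$ denotes the interval of flats between $A$ and $B$); $[n]$ lies in every building set since $M$ is connected. $\mathcal S\subseteq\mathcal G$ is nested if the join of any $t\ge 2$ pairwise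 incomparable elements of $\mathcal S$ is not in $\mathcal G$. *)

theory Defs
  imports "HOL-Analysis.Analysis"
begin

text \<open>A matroid on the finite ground set UNIV of type 'a (playing the role of [n]),
  given by its set of bases.\<close>

definition matroid_bases :: "'a::finite set set \<Rightarrow> bool" where
  "matroid_bases B \<longleftrightarrow> B \<noteq> {} \<and>
     (\<forall>B1\<in>B. \<forall>B2\<in>B. \<forall>x\<in>B1 - B2. \<exists>y\<in>B2 - B1. insert y (B1 - {x}) \<in> B)"

definition indep :: "'a::finite set set \<Rightarrow> 'a set \<Rightarrow> bool" where
  "indep B X \<longleftrightarrow> (\<exists>b\<in>B. X \<subseteq> b)"

definition mrank :: "'a::finite set set \<Rightarrow> 'a set \<Rightarrow> nat" where
  "mrank B X = Max (card ` {Y. Y \<subseteq> X \<and> indep B Y})"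

definition mcl :: "'a::finite set set \<Rightarrow> 'a set \<Rightarrow> 'a set" where
  "mcl B X = {e. mrank B (insert e X) = mrank B X}"

definition flat :: "'a::finite set set \<Rightarrow> 'a set \<Rightarrow> bool" where
  "flat B F \<longleftrightarrow> mcl B F = F"

definition circuit :: "'a::finite set set \<Rightarrow> 'a set \<Rightarrow> bool" where
  "circuit B C \<longleftrightarrow> \<not> indep B C \<and> (\<forall>x\<in>C. indep B (C - {x}))"

definition connected_matroid :: "'a::finite set set \<Rightarrow> bool" where
  "connected_matroid B \<longleftrightarrow> (\<forall>e f. e \<noteq> f \<longrightarrow> (\<exists>C. circuit B C \<and> e \<in> C \<and> f \<in> C))"

definition weight_bases :: "'a::finite set set \<Rightarrow> real^'a \<Rightarrow> 'a set set" where
  "weight_bases B w = {b\<in>B. \<forall>b'\<in>B. (\<Sum>i\<in>b'. w $ i) \<le> (\<Sum>i\<in>b. w $ i)}"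

definition max_indep_in :: "'a::finite set set \<Rightarrow> 'a set \<Rightarrow> 'a set \<Rightarrow> bool" where
  "max_indep_in B X \<tau> \<longleftrightarrow> \<tau> \<subseteq> X \<and> indep B \<tau> \<and>
     (\<forall>\<tau>'. \<tau> \<subset> \<tau>' \<and> \<tau>' \<subseteq> X \<longrightarrow> \<not> indep B \<tau>')"

text \<open>Bases of the minor M[F,G] (restrict to G, contract F); ground set G - F.\<close>
definition minor_bases :: "'a::finite set set \<Rightarrow> 'a set \<Rightarrow> 'a set \<Rightarrow> 'a set set" where
  "minor_bases B F G = {\<tau> - F | \<tau>. max_indep_in B G \<tau> \<and> (\<exists>\<sigma>. max_indep_in B F \<sigma> \<and> \<sigma> \<subseteq> \<tau>)}"

definition flat_join :: "'a::finite set set \<Rightarrow> 'a set set \<Rightarrow> 'a set" where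
  "flat_join B \<X> = mcl B (\<Union>\<X>)"

definition maximal_in :: "'a set set \<Rightarrow> 'a set set" where
  "maximal_in \<S> = {G\<in>\<S>. \<not> (\<exists>H\<in>\<S>. G \<subset> H)}"

definition building_set :: "'a::finite set set \<Rightarrow> 'a set set \<Rightarrow> bool" where
  "building_set B \<G> \<longleftrightarrow> \<G> \<subseteq> {F. flat B F \<and> F \<noteq> {}} \<and>
     (\<forall>X. flat B X \<and> X \<noteq> {} \<longrightarrow>
        (let Mx = maximal_in {G\<in>\<G>. G \<subseteq> X};
             P = PiE Mx (\<lambda>G. {F. flat B F \<and> F \<subseteq> G});
             j = (\<lambda>f. flat_join B (f ` Mx))
         in bij_betw j P {Y. flat B Y \<and> Y \<subseteq> X} \<and>
            (\<forall>f\<in>P. \<forall>g\<in>P. (\<forall>G\<in>Mx. f G \<subseteq> g G) \<longleftrightarrow> j f \<subseteq> j g)))"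

definition nested :: "'a::finite set set \<Rightarrow> 'a set set \<Rightarrow> 'a set set \<Rightarrow> bool" where
  "nested B \<G> \<S> \<longleftrightarrow> \<S> \<subseteq> \<G> \<and>
     (\<forall>T\<subseteq>\<S>. card T \<ge> 2 \<and> (\<forall>G\<in>T. \<forall>H\<in>T. G \<subseteq> H \<longrightarrow> G = H) \<longrightarrow> flat_join B T \<notin> \<G>)"

definition G_minus :: "'a::finite set set \<Rightarrow> 'a set set \<Rightarrow> 'a set \<Rightarrow> 'a set" where
  "G_minus B \<S> G = (let L = {H\<in>\<S>. H \<subset> G} in if L = {} then {} else flat_join B (maximal_in L))"

definition incvec :: "'a::finite set \<Rightarrow> real^'a" where
  "incvec G = (\<chi> i. if i \<in> G then 1 else 0)"

definition nonneg_cone :: "(real^'a::finite) set \<Rightarrow> (real^'a) set" where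
  "nonneg_cone V = {\<Sum>v\<in>V. c v *\<^sub>R v | c. \<forall>v\<in>V. 0 \<le> c v}"

definition is_direct_sum :: "'a::finite set set \<Rightarrow> 'i set \<Rightarrow> ('i \<Rightarrow> 'a set) \<Rightarrow> ('i \<Rightarrow> 'a set set) \<Rightarrow> bool" where
  "is_direct_sum B I E Bs \<longleftrightarrow>
     (\<forall>i\<in>I. \<forall>j\<in>I. i \<noteq> j \<longrightarrow> E i \<inter> E j = {}) \<and> (\<Union>i\<in>I. E i) = UNIV \<and>
     B = {\<Union>i\<in>I. b i | b. \<forall>i\<in>I. b i \<in> Bs i}"

end

theory Submission
  imports Defs
begin


locale mat =
  fixes B :: "'a::finite set set"
  assumes mb: "matroid_bases B"
begin

lemma B_ne: "B \<noteq> {}" using mb unfolding matroid_bases_def by blast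

lemma exch: "b1 \<in> B \<Longrightarrow> b2 \<in> B \<Longrightarrow> x \<in> b1 - b2 \<Longrightarrow> \<exists>y\<in>b2 - b1. insert y (b1 - {x}) \<in> B"
  using mb unfolding matroid_bases_def by blast

lemma indep_empty: "indep B {}"
  using B_ne unfolding indep_def by blast

lemma indep_subset: "indep B J \<Longrightarrow> I \<subseteq> J \<Longrightarrow> indep B I"
  unfolding indep_def by blast

lemma base_indep: "b \<in> B \<Longrightarrow> indep B b"
  unfolding indep_def by blast

lemma indep_sub_base: "b \<in> B \<Longrightarrow> X \<subseteq> b \<Longrightarrow> indep B X"
  unfolding indep_def by blast

lemma bases_card_aux: "\<forall>b1 b2. b1 \<in> B \<longrightarrow> b2 \<in> B \<longrightarrow> card (b1 - b2) = n \<longrightarrow> card b1 = card b2"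
proof (induction n)
  case 0
  show ?case
  proof (intro allI impI)
    fix b1 b2 assume h: "b1 \<in> B" "b2 \<in> B" "card (b1 - b2) = 0"
    hence s: "b1 \<subseteq> b2" by auto
    have "b2 \<subseteq> b1"
    proof
      fix x assume "x \<in> b2"
      show "x \<in> b1"
      proof (rule ccontr)
        assume "x \<notin> b1"
        then obtain y where "y \<in> b1 - b2" using exch[OF h(2) h(1), of x] \<open>x \<in> b2\<close> by blast
        thus False using s by blast
      qed
    qed
    with s show "card b1 = card b2" by simp
  qed
next
  case (Suc n)
  show ?case
  proof (intro allI impI)
    fix b1 b2 assume h: "b1 \<in> B" "b2 \<in> B" "card (b1 - b2) = Suc n"
    have "b1 - b2 \<noteq> {}" using h(3) by (metis card.empty nat.distinct(1))
    then obtain x where x: "x \<in> b1 - b2" by blast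
    obtain y where y: "y \<in> b2 - b1" "insert y (b1 - {x}) \<in> B" using exch[OF h(1) h(2) x] by blast
    have "insert y (b1 - {x}) - b2 = (b1 - b2) - {x}" using x y by auto
    hence "card (insert y (b1 - {x}) - b2) = n" using h(3) x by simp
    hence "card (insert y (b1 - {x})) = card b2" using Suc.IH y(2) h(2) by blast
    moreover have "card (insert y (b1 - {x})) = card b1"
    proof -
      have "card b1 > 0" using x card_gt_0_iff by fastforce
      thus ?thesis using x y by (simp add: card_insert_if)
    qed
    ultimately show "card b1 = card b2" by simp
  qed
qed

lemma bases_card: "b1 \<in> B \<Longrightarrow> b2 \<in> B \<Longrightarrow> card b1 = card b2"
  using bases_card_aux by blast

lemma augment:
  assumes I: "indep B I" and J: "indep B J" and c: "card I < card J"
  shows "\<exists>x\<in>J - I. indep B (insert x I)"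
proof (rule ccontr)
  assume na: "\<not> ?thesis"
  obtain b1 where b1: "b1 \<in> B" "I \<subseteq> b1" using I unfolding indep_def by blast
  obtain b0 where "b0 \<in> B" "J \<subseteq> b0" using J unfolding indep_def by blast
  then obtain b2 where b2: "b2 \<in> B \<and> J \<subseteq> b2"
    and mn: "\<forall>b'. b' \<in> B \<and> J \<subseteq> b' \<longrightarrow> card (b2 - (J \<union> b1)) \<le> card (b' - (J \<union> b1))"
  proof -
    have "\<exists>x. (x \<in> B \<and> J \<subseteq> x) \<and> (\<forall>y. y \<in> B \<and> J \<subseteq> y \<longrightarrow> card (x - (J \<union> b1)) \<le> card (y - (J \<union> b1)))"
      by (rule ex_has_least_nat[of "\<lambda>b. b \<in> B \<and> J \<subseteq> b" b0]) (use \<open>b0 \<in> B\<close> \<open>J \<subseteq> b0\<close> in simp)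
    then show ?thesis using that by blast
  qed
  have a: "J \<inter> b1 \<subseteq> I"
  proof
    fix x assume "x \<in> J \<inter> b1"
    show "x \<in> I"
    proof (rule ccontr)
      assume "x \<notin> I"
      have "insert x I \<subseteq> b1" using b1(2) \<open>x \<in> J \<inter> b1\<close> by blast
      hence "indep B (insert x I)" using b1(1) indep_sub_base by blast
      thus False using na \<open>x \<notin> I\<close> \<open>x \<in> J \<inter> b1\<close> by blast
    qed
  qed
  have b: "b2 - (J \<union> b1) = {}"
  proof (rule ccontr)
    assume "b2 - (J \<union> b1) \<noteq> {}"
    then obtain x where x: "x \<in> b2 - (J \<union> b1)" by blast
    then obtain y where y: "y \<in> b1 - b2" "insert y (b2 - {x}) \<in> B" using exch[of b2 b1 x] b1 b2 by blast
    have "J \<subseteq> insert y (b2 - {x})" using x b2 by blast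
    hence "card (b2 - (J \<union> b1)) \<le> card (insert y (b2 - {x}) - (J \<union> b1))" using mn y by blast
    moreover have "insert y (b2 - {x}) - (J \<union> b1) = (b2 - (J \<union> b1)) - {x}" using y by auto
    moreover have "card ((b2 - (J \<union> b1)) - {x}) < card (b2 - (J \<union> b1))"
      by (rule card_Diff1_less) (use x in auto)
    ultimately show False by simp
  qed
  have c2: "b1 - (I \<union> b2) = {}"
  proof (rule ccontr)
    assume "b1 - (I \<union> b2) \<noteq> {}"
    then obtain x where x: "x \<in> b1 - (I \<union> b2)" by blast
    then obtain y where y: "y \<in> b2 - b1" "insert y (b1 - {x}) \<in> B" using exch[of b1 b2 x] b1 b2 by blast
    have yJ: "y \<in> J" using b y by blast
    have "y \<notin> I" using y b1 by blast
    moreover have "insert y I \<subseteq> insert y (b1 - {x})" using x b1(2) by blast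
    moreover have "indep B (insert y I)" using y(2) calculation(2) indep_sub_base by blast
    ultimately show False using na yJ by blast
  qed
  have d1: "J - I \<subseteq> b2 - b1" using a b2 by blast
  have d2: "b1 - b2 \<subseteq> I - J" using c2 b2 by blast
  have "card (J - I) > card (I - J)"
  proof -
    have "card J = card (J \<inter> I) + card (J - I)" by (rule card_Int_Diff) simp
    moreover have "card I = card (I \<inter> J) + card (I - J)" by (rule card_Int_Diff) simp
    ultimately show ?thesis using c by (simp add: Int_commute)
  qed
  moreover have "card (J - I) \<le> card (b2 - b1)" by (rule card_mono) (simp_all add: d1)
  moreover have "card (b1 - b2) \<le> card (I - J)" by (rule card_mono) (simp_all add: d2)
  ultimately have "card (b2 - b1) > card (b1 - b2)" by linarith
  moreover have "card b1 = card b2" using bases_card b1 b2 by blast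
  hence "card (b1 - b2) = card (b2 - b1)"
    using card_Int_Diff[of b1 b2] card_Int_Diff[of b2 b1] by (simp add: Int_commute)
  ultimately show False by simp
qed

end


context mat
begin

lemma max_indepD:
  assumes "max_indep_in B X I"
  shows "I \<subseteq> X" "indep B I" "\<And>I'. I \<subset> I' \<Longrightarrow> I' \<subseteq> X \<Longrightarrow> \<not> indep B I'"
  using assms unfolding max_indep_in_def by auto

lemma max_indepI:
  assumes "I \<subseteq> X" "indep B I" "\<And>I'. I \<subset> I' \<Longrightarrow> I' \<subseteq> X \<Longrightarrow> \<not> indep B I'"
  shows "max_indep_in B X I"
  using assms unfolding max_indep_in_def by auto

lemma rank_set_ne: "card ` {Y. Y \<subseteq> X \<and> indep B Y} \<noteq> {}"
  using indep_empty by blast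

lemma rank_ge: "Y \<subseteq> X \<Longrightarrow> indep B Y \<Longrightarrow> card Y \<le> mrank B X"
  unfolding mrank_def by (rule Max_ge) auto

lemma rank_obtain: "\<exists>Y. Y \<subseteq> X \<and> indep B Y \<and> card Y = mrank B X"
proof -
  have "mrank B X \<in> card ` {Y. Y \<subseteq> X \<and> indep B Y}"
    unfolding mrank_def by (rule Max_in) (use rank_set_ne in auto)
  thus ?thesis by auto
qed

lemma rank_le_card: "mrank B X \<le> card X"
proof -
  obtain Y where Y: "Y \<subseteq> X" "indep B Y" "card Y = mrank B X" using rank_obtain by blast
  have "card Y \<le> card X" by (rule card_mono) (use Y in auto)
  thus ?thesis using Y by simp
qed

lemma rank_mono: "X \<subseteq> Y \<Longrightarrow> mrank B X \<le> mrank B Y"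
proof -
  assume XY: "X \<subseteq> Y"
  obtain Z where Z: "Z \<subseteq> X" "indep B Z" "card Z = mrank B X" using rank_obtain by blast
  have "card Z \<le> mrank B Y" by (rule rank_ge) (use Z XY in auto)
  thus ?thesis using Z by simp
qed

lemma rank_empty: "mrank B {} = 0"
  using rank_le_card[of "{}"] by simp

lemma indep_iff_rank: "indep B X \<longleftrightarrow> mrank B X = card X"
proof
  assume "indep B X" thus "mrank B X = card X" using rank_ge[of X X] rank_le_card[of X] by simp
next
  assume h: "mrank B X = card X"
  obtain Y where Y: "Y \<subseteq> X" "indep B Y" "card Y = mrank B X" using rank_obtain by blast
  hence "Y = X" using h by (intro card_subset_eq) auto
  thus "indep B X" using Y by simp
qed

lemma max_indep_card: assumes "max_indep_in B X I" shows "card I = mrank B X"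
proof -
  note I = max_indepD(1,2)[OF assms] and mx = max_indepD(3)[OF assms]
  obtain Y where Y: "Y \<subseteq> X" "indep B Y" "card Y = mrank B X" using rank_obtain by blast
  show ?thesis
  proof (rule ccontr)
    assume "card I \<noteq> mrank B X"
    hence "card I < card Y" using rank_ge[OF I] Y by simp
    then obtain x where x: "x \<in> Y - I" "indep B (insert x I)" using augment[OF I(2) Y(2)] by blast
    have "I \<subset> insert x I" using x by blast
    moreover have "insert x I \<subseteq> X" using x Y I by blast
    ultimately show False using mx[of "insert x I"] x by blast
  qed
qed

lemma max_indep_iff: "max_indep_in B X I \<longleftrightarrow> I \<subseteq> X \<and> indep B I \<and> card I = mrank B X"
proof
  assume a: "max_indep_in B X I" thus "I \<subseteq> X \<and> indep B I \<and> card I = mrank B X"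
    using max_indep_card[OF a] max_indepD(1,2)[OF a] by blast
next
  assume h: "I \<subseteq> X \<and> indep B I \<and> card I = mrank B X"
  show "max_indep_in B X I"
  proof (rule max_indepI)
    fix I' assume h2: "I \<subset> I'" "I' \<subseteq> X"
    show "\<not> indep B I'"
    proof
      assume "indep B I'"
      hence "card I' \<le> mrank B X" using rank_ge h2 by blast
      moreover have "card I < card I'" using h2 by (intro psubset_card_mono) auto
      ultimately show False using h by simp
    qed
  qed (use h in auto)
qed

lemma extend_max: assumes "indep B I" "I \<subseteq> X" shows "\<exists>J. I \<subseteq> J \<and> max_indep_in B X J"
proof -
  let ?P = "\<lambda>J. I \<subseteq> J \<and> J \<subseteq> X \<and> indep B J"
  have ex: "\<exists>J. ?P J \<and> (\<forall>y. ?P y \<longrightarrow> card X - card J \<le> card X - card y)"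
    by (rule ex_has_least_nat[of ?P I "\<lambda>J. card X - card J"]) (use assms in simp)
  obtain J where J: "?P J" and mn: "\<forall>y. ?P y \<longrightarrow> card X - card J \<le> card X - card y"
    using ex by blast
  have "max_indep_in B X J"
  proof (rule max_indepI)
    show "J \<subseteq> X" using J by simp
    show "indep B J" using J by simp
    fix J' assume h: "J \<subset> J'" "J' \<subseteq> X"
    show "\<not> indep B J'"
    proof
      assume iJ: "indep B J'"
      have "?P J'" using h J iJ by auto
      hence "card X - card J \<le> card X - card J'" using mn by simp
      moreover have "card J < card J'" using h by (intro psubset_card_mono) auto
      moreover have "card J' \<le> card X" using h by (intro card_mono) auto
      ultimately show False by linarith
    qed
  qed
  thus ?thesis using J by blast
qed

lemma max_indep_exists: "\<exists>J. max_indep_in B X J"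
  using extend_max[OF indep_empty, of X] by blast

lemma submod: "mrank B (X \<union> Y) + mrank B (X \<inter> Y) \<le> mrank B X + mrank B Y"
proof -
  obtain I where I: "max_indep_in B (X \<inter> Y) I" using max_indep_exists by blast
  hence Ii: "indep B I" "I \<subseteq> X \<inter> Y" "card I = mrank B (X \<inter> Y)" using max_indep_iff by auto
  obtain J where J: "I \<subseteq> J" "max_indep_in B (X \<union> Y) J" using extend_max[OF Ii(1), of "X \<union> Y"] Ii(2) by blast
  hence Ji: "indep B J" "J \<subseteq> X \<union> Y" "card J = mrank B (X \<union> Y)" using max_indep_iff by auto
  have a: "card (J \<inter> X) \<le> mrank B X" by (rule rank_ge) (use indep_subset[OF Ji(1)] in auto)
  have b: "card (J \<inter> Y) \<le> mrank B Y" by (rule rank_ge) (use indep_subset[OF Ji(1)] in auto)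
  have e1: "card (J \<inter> X) + card (J \<inter> Y) = card ((J \<inter> X) \<union> (J \<inter> Y)) + card ((J \<inter> X) \<inter> (J \<inter> Y))"
    by (rule card_Un_Int) auto
  have e2: "(J \<inter> X) \<union> (J \<inter> Y) = J" using Ji by blast
  have "card (J \<inter> X) + card (J \<inter> Y) = card J + card ((J \<inter> X) \<inter> (J \<inter> Y))" using e1 unfolding e2 .
  moreover have "card I \<le> card ((J \<inter> X) \<inter> (J \<inter> Y))" by (rule card_mono) (use Ii J in auto)
  ultimately show ?thesis using a b Ii Ji by linarith
qed

lemma rank_insert_le: "mrank B (insert e X) \<le> mrank B X + 1"
proof -
  obtain Y where Y: "Y \<subseteq> insert e X" "indep B Y" "card Y = mrank B (insert e X)" using rank_obtain by blast
  have "card (Y - {e}) \<le> mrank B X" by (rule rank_ge) (use Y indep_subset in auto)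
  moreover have "card Y \<le> card (Y - {e}) + 1"
  proof -
    have "card Y = card (Y \<inter> {e}) + card (Y - {e})" by (rule card_Int_Diff) simp
    moreover have "card (Y \<inter> {e}) \<le> card {e}" by (rule card_mono) auto
    ultimately show ?thesis by simp
  qed
  ultimately show ?thesis using Y by linarith
qed

lemma mcl_iff: "e \<in> mcl B X \<longleftrightarrow> mrank B (insert e X) = mrank B X"
  by (simp add: mcl_def)

lemma cl_sub: "X \<subseteq> mcl B X"
  unfolding mcl_def by (auto simp: insert_absorb)

lemma cl_rank_union: "Z \<subseteq> mcl B X \<Longrightarrow> mrank B (X \<union> Z) = mrank B X"
proof (induction Z rule: infinite_finite_induct)
  case (infinite A) thus ?case by simp
next
  case empty thus ?case by simp
next
  case (insert z Z)
  have IH: "mrank B (X \<union> Z) = mrank B X" using insert by blast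
  have ez: "mrank B (insert z X) = mrank B X" using insert.prems by (simp add: mcl_def)
  have eq: "(X \<union> Z) \<union> insert z X = X \<union> insert z Z" by blast
  have "mrank B (X \<union> insert z Z) + mrank B ((X \<union> Z) \<inter> insert z X) \<le> mrank B (X \<union> Z) + mrank B (insert z X)"
    using submod[of "X \<union> Z" "insert z X"] unfolding eq .
  moreover have "mrank B X \<le> mrank B ((X \<union> Z) \<inter> insert z X)" by (rule rank_mono) blast
  moreover have "mrank B X \<le> mrank B (X \<union> insert z Z)" by (rule rank_mono) blast
  ultimately show ?case using IH ez by linarith
qed

lemma cl_rank: "mrank B (mcl B X) = mrank B X"
  using cl_rank_union[of "mcl B X" X] cl_sub[of X] by (simp add: Un_absorb1)

lemma cl_mono: assumes "X \<subseteq> Y" shows "mcl B X \<subseteq> mcl B Y"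
proof
  fix e assume "e \<in> mcl B X"
  hence ex: "mrank B (insert e X) = mrank B X" by (simp add: mcl_def)
  have eq: "insert e X \<union> Y = insert e Y" using assms by blast
  have "mrank B (insert e Y) + mrank B (insert e X \<inter> Y) \<le> mrank B (insert e X) + mrank B Y"
    using submod[of "insert e X" Y] unfolding eq .
  moreover have "mrank B X \<le> mrank B (insert e X \<inter> Y)" by (rule rank_mono) (use assms in blast)
  moreover have "mrank B Y \<le> mrank B (insert e Y)" by (rule rank_mono) blast
  ultimately have "mrank B (insert e Y) = mrank B Y" using ex by linarith
  thus "e \<in> mcl B Y" by (simp add: mcl_def)
qed

lemma cl_idem: "mcl B (mcl B X) = mcl B X"
proof
  show "mcl B X \<subseteq> mcl B (mcl B X)" by (rule cl_sub)
next
  show "mcl B (mcl B X) \<subseteq> mcl B X"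
  proof
    fix e assume "e \<in> mcl B (mcl B X)"
    hence a: "mrank B (insert e (mcl B X)) = mrank B X" using mcl_iff[of e "mcl B X"] cl_rank[of X] by simp
    have "mrank B (insert e X) \<le> mrank B (insert e (mcl B X))" by (rule rank_mono) (use cl_sub in blast)
    moreover have "mrank B X \<le> mrank B (insert e X)" by (rule rank_mono) blast
    ultimately show "e \<in> mcl B X" using a mcl_iff[of e X] by simp
  qed
qed

lemma flat_cl: "flat B (mcl B X)"
  unfolding flat_def by (rule cl_idem)

lemma cl_flat_sub: "X \<subseteq> F \<Longrightarrow> flat B F \<Longrightarrow> mcl B X \<subseteq> F"
  using cl_mono[of X F] unfolding flat_def by simp

lemma cl_span: "Z \<subseteq> mcl B X \<Longrightarrow> mcl B Z \<subseteq> mcl B X"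
  using cl_flat_sub flat_cl by blast

lemma circuit_cl: assumes "circuit B C" "e \<in> C" shows "e \<in> mcl B (C - {e})"
proof -
  have ni: "\<not> indep B C" and i: "indep B (C - {e})" using assms unfolding circuit_def by auto
  have c: "card C > 0" using assms(2) card_gt_0_iff by fastforce
  have r1: "mrank B (C - {e}) = card C - 1" using i indep_iff_rank assms(2) by simp
  have "mrank B C \<noteq> card C" using ni indep_iff_rank by blast
  hence "mrank B C < card C" using rank_le_card[of C] by linarith
  moreover have "mrank B (C - {e}) \<le> mrank B C" by (rule rank_mono) blast
  ultimately have "mrank B C = mrank B (C - {e})" using r1 c by linarith
  moreover have "insert e (C - {e}) = C" using assms(2) by blast
  ultimately show ?thesis unfolding mcl_def by simp
qed

lemma indep_not_cl: assumes "indep B J" "e \<in> J" shows "e \<notin> mcl B (J - {e})"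
proof
  assume "e \<in> mcl B (J - {e})"
  hence "mrank B J = mrank B (J - {e})" unfolding mcl_def using assms(2) by (simp add: insert_absorb)
  moreover have "mrank B J = card J" using assms indep_iff_rank by blast
  moreover have "mrank B (J - {e}) = card J - 1" using assms indep_iff_rank indep_subset[of J "J - {e}"] by auto
  moreover have "card J > 0" using assms(2) card_gt_0_iff by fastforce
  ultimately show False by linarith
qed

lemma max_indep_spans: assumes "max_indep_in B X I" shows "X \<subseteq> mcl B I"
proof
  fix e assume e: "e \<in> X"
  show "e \<in> mcl B I"
  proof (cases "e \<in> I")
    case True thus ?thesis using cl_sub by blast
  next
    case False
    have I: "I \<subseteq> X" "indep B I" "card I = mrank B X" using assms max_indep_iff by auto
    have "\<not> indep B (insert e I)" using max_indepD(3)[OF assms, of "insert e I"] I e False by blast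
    hence "mrank B (insert e I) \<noteq> card (insert e I)" using indep_iff_rank by blast
    hence "mrank B (insert e I) < card I + 1" using rank_le_card[of "insert e I"] False by simp
    moreover have "mrank B I \<le> mrank B (insert e I)" by (rule rank_mono) blast
    moreover have "mrank B I = card I" using I indep_iff_rank by blast
    ultimately show ?thesis unfolding mcl_def by simp
  qed
qed

lemma spanning_max_indep: assumes "indep B I" "I \<subseteq> X" "X \<subseteq> mcl B I" shows "max_indep_in B X I"
proof -
  have "mrank B X \<le> mrank B (mcl B I)" using assms(3) rank_mono by blast
  hence "mrank B X \<le> card I" using cl_rank assms(1) indep_iff_rank by simp
  moreover have "card I \<le> mrank B X" using rank_ge assms by blast
  ultimately show ?thesis using max_indep_iff assms by simp
qed

lemma dep_circuit: assumes "\<not> indep B D" shows "\<exists>C. C \<subseteq> D \<and> circuit B C"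
proof -
  have "\<exists>C. (C \<subseteq> D \<and> \<not> indep B C) \<and> (\<forall>y. (y \<subseteq> D \<and> \<not> indep B y) \<longrightarrow> card C \<le> card y)"
    by (rule ex_has_least_nat[of "\<lambda>C. C \<subseteq> D \<and> \<not> indep B C" D card]) (use assms in simp)
  then obtain C where C: "C \<subseteq> D" "\<not> indep B C" and mn: "\<And>y. y \<subseteq> D \<Longrightarrow> \<not> indep B y \<Longrightarrow> card C \<le> card y" by blast
  have "\<forall>x\<in>C. indep B (C - {x})"
  proof
    fix x assume x: "x \<in> C"
    show "indep B (C - {x})"
    proof (rule ccontr)
      assume "\<not> indep B (C - {x})"
      hence "card C \<le> card (C - {x})" using mn C by blast
      moreover have "card (C - {x}) < card C" by (rule card_Diff1_less) (use x in auto)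
      ultimately show False by simp
    qed
  qed
  hence "circuit B C" using C(2) unfolding circuit_def by simp
  thus ?thesis using C(1) by blast
qed

lemma loop_iff: "e \<in> mcl B {} \<longleftrightarrow> \<not> indep B {e}"
  unfolding mcl_def using indep_iff_rank[of "{e}"] rank_empty rank_le_card[of "{e}"] by auto

lemma contraction:
  assumes FG: "F \<subseteq> G" and tau: "max_indep_in B G \<tau>" and sig: "max_indep_in B F \<sigma>" and st: "\<sigma> \<subseteq> \<tau>"
    and I: "max_indep_in B F I"
  shows "max_indep_in B G ((\<tau> - F) \<union> I)"
proof -
  have ti: "\<tau> \<subseteq> G" "indep B \<tau>" "card \<tau> = mrank B G" using tau max_indep_iff by auto
  have si: "\<sigma> \<subseteq> F" "indep B \<sigma>" "card \<sigma> = mrank B F" using sig max_indep_iff by auto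
  have Ii: "I \<subseteq> F" "indep B I" "card I = mrank B F" using I max_indep_iff by auto
  have tF: "\<tau> \<inter> F = \<sigma>"
  proof (rule ccontr)
    assume "\<tau> \<inter> F \<noteq> \<sigma>"
    hence "\<sigma> \<subset> \<tau> \<inter> F" using st si by blast
    moreover have "indep B (\<tau> \<inter> F)" using indep_subset ti by blast
    ultimately show False using max_indepD(3)[OF sig, of "\<tau> \<inter> F"] ti by blast
  qed
  define A where "A = \<tau> - F"
  have tau_eq: "\<tau> = A \<union> \<sigma>" using tF A_def by blast
  have dj: "A \<inter> \<sigma> = {}" "A \<inter> I = {}" using A_def si Ii by auto
  have cta: "card \<tau> = card A + card \<sigma>" unfolding tau_eq by (rule card_Un_disjoint) (use dj in auto)
  have cAI: "card (A \<union> I) = card A + card I" by (rule card_Un_disjoint) (use dj in auto)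
  have FI: "F \<subseteq> mcl B (A \<union> I)" using max_indep_spans[OF I] cl_mono[of I "A \<union> I"] by blast
  have Fs: "F \<subseteq> mcl B (A \<union> \<sigma>)" using max_indep_spans[OF sig] cl_mono[of \<sigma> "A \<union> \<sigma>"] by blast
  have "mrank B (A \<union> I) = mrank B ((A \<union> I) \<union> F)" using cl_rank_union[OF FI] by simp
  also have "(A \<union> I) \<union> F = (A \<union> \<sigma>) \<union> F" using Ii si by blast
  also have "mrank B ((A \<union> \<sigma>) \<union> F) = mrank B (A \<union> \<sigma>)" using cl_rank_union[OF Fs] by simp
  also have "... = card \<tau>" using tau_eq ti indep_iff_rank by simp
  finally have "mrank B (A \<union> I) = card (A \<union> I)" using cta cAI si Ii by simp
  hence "indep B (A \<union> I)" using indep_iff_rank by blast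
  moreover have "A \<union> I \<subseteq> G" using A_def ti Ii FG by blast
  moreover have "card (A \<union> I) = mrank B G" using cAI cta si Ii ti by simp
  ultimately show ?thesis using max_indep_iff A_def by simp
qed

end


locale bsn = mat B for B :: "'a::finite set set" +
  fixes \<G> \<S> :: "'a set set"
  assumes conn: "connected_matroid B"
    and bs: "building_set B \<G>"
    and ns: "nested B \<G> \<S>"
begin

definition MX :: "'a set \<Rightarrow> 'a set set" where
  "MX X = maximal_in {G\<in>\<G>. G \<subseteq> X}"

definition PP :: "'a set \<Rightarrow> ('a set \<Rightarrow> 'a set) set" where
  "PP X = PiE (MX X) (\<lambda>G. {F. flat B F \<and> F \<subseteq> G})"

lemma G_flat: "G \<in> \<G> \<Longrightarrow> flat B G" and G_ne: "G \<in> \<G> \<Longrightarrow> G \<noteq> {}"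
  using bs unfolding building_set_def by auto

lemma S_G: "\<S> \<subseteq> \<G>"
  using ns unfolding nested_def by blast

lemma nested_ac: "T \<subseteq> \<S> \<Longrightarrow> 2 \<le> card T \<Longrightarrow> (\<forall>G\<in>T. \<forall>H\<in>T. G \<subseteq> H \<longrightarrow> G = H) \<Longrightarrow> mcl B (\<Union>T) \<notin> \<G>"
  using ns unfolding nested_def flat_join_def by blast

lemma bs_X: assumes "flat B X" "X \<noteq> {}" shows
   "bij_betw (\<lambda>f. mcl B (\<Union>(f ` MX X))) (PP X) {Y. flat B Y \<and> Y \<subseteq> X} \<and>
   (\<forall>f\<in>PP X. \<forall>g\<in>PP X. (\<forall>G\<in>MX X. f G \<subseteq> g G) \<longleftrightarrow> mcl B (\<Union>(f ` MX X)) \<subseteq> mcl B (\<Union>(g ` MX X)))"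
proof -
  have a: "\<forall>X. flat B X \<and> X \<noteq> {} \<longrightarrow>
        (let Mx = maximal_in {G\<in>\<G>. G \<subseteq> X};
             P = PiE Mx (\<lambda>G. {F. flat B F \<and> F \<subseteq> G});
             j = (\<lambda>f. flat_join B (f ` Mx))
         in bij_betw j P {Y. flat B Y \<and> Y \<subseteq> X} \<and>
            (\<forall>f\<in>P. \<forall>g\<in>P. (\<forall>G\<in>Mx. f G \<subseteq> g G) \<longleftrightarrow> j f \<subseteq> j g))"
    using bs unfolding building_set_def by (rule conjunct2)
  have "(let Mx = maximal_in {G\<in>\<G>. G \<subseteq> X};
             P = PiE Mx (\<lambda>G. {F. flat B F \<and> F \<subseteq> G});
             j = (\<lambda>f. flat_join B (f ` Mx))
         in bij_betw j P {Y. flat B Y \<and> Y \<subseteq> X} \<and>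
            (\<forall>f\<in>P. \<forall>g\<in>P. (\<forall>G\<in>Mx. f G \<subseteq> g G) \<longleftrightarrow> j f \<subseteq> j g))"
    using a assms by simp
  thus ?thesis unfolding Let_def MX_def PP_def flat_join_def .
qed

lemma bs_ord: "flat B X \<Longrightarrow> X \<noteq> {} \<Longrightarrow> f \<in> PP X \<Longrightarrow> g \<in> PP X \<Longrightarrow>
   mcl B (\<Union>(f ` MX X)) \<subseteq> mcl B (\<Union>(g ` MX X)) \<Longrightarrow> G \<in> MX X \<Longrightarrow> f G \<subseteq> g G"
proof -
  assume a: "flat B X" "X \<noteq> {}" "f \<in> PP X" "g \<in> PP X" "mcl B (\<Union>(f ` MX X)) \<subseteq> mcl B (\<Union>(g ` MX X))" "G \<in> MX X"
  have "\<forall>f\<in>PP X. \<forall>g\<in>PP X. (\<forall>G\<in>MX X. f G \<subseteq> g G) \<longleftrightarrow> mcl B (\<Union>(f ` MX X)) \<subseteq> mcl B (\<Union>(g ` MX X))"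
    using bs_X[OF a(1,2)] by (rule conjunct2)
  hence "(\<forall>G\<in>MX X. f G \<subseteq> g G)" using a(3,4,5) by blast
  thus ?thesis using a(6) by blast
qed

lemma bs_surj: assumes "flat B X" "X \<noteq> {}" "flat B Y" "Y \<subseteq> X"
  shows "\<exists>f\<in>PP X. mcl B (\<Union>(f ` MX X)) = Y"
proof -
  have "bij_betw (\<lambda>f. mcl B (\<Union>(f ` MX X))) (PP X) {Y. flat B Y \<and> Y \<subseteq> X}" using bs_X[OF assms(1,2)] by (rule conjunct1)
  hence "Y \<in> (\<lambda>f. mcl B (\<Union>(f ` MX X))) ` PP X" using assms unfolding bij_betw_def by blast
  thus ?thesis by blast
qed

lemma MX_G: "K \<in> MX X \<Longrightarrow> K \<in> \<G>" and MX_sub: "K \<in> MX X \<Longrightarrow> K \<subseteq> X"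
  unfolding MX_def maximal_in_def by auto

lemma MX_max: "K \<in> MX X \<Longrightarrow> G \<in> \<G> \<Longrightarrow> G \<subseteq> X \<Longrightarrow> K \<subseteq> G \<Longrightarrow> G = K"
  unfolding MX_def maximal_in_def by blast

lemma exists_MX: assumes "G \<in> \<G>" "G \<subseteq> X" shows "\<exists>K\<in>MX X. G \<subseteq> K"
proof -
  have "finite {G\<in>\<G>. G \<subseteq> X}" by simp
  from finite_has_maximal2[OF this, of G] assms
  obtain K where K: "K \<in> {G\<in>\<G>. G \<subseteq> X}" "G \<subseteq> K" "\<forall>b\<in>{G\<in>\<G>. G \<subseteq> X}. K \<subseteq> b \<longrightarrow> K = b" by auto
  have "K \<in> MX X" unfolding MX_def maximal_in_def using K by blast
  thus ?thesis using K by blast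
qed

lemma PP_I: assumes "\<And>K. K \<in> MX X \<Longrightarrow> flat B (h K) \<and> h K \<subseteq> K"
  shows "restrict h (MX X) \<in> PP X"
  unfolding PP_def using assms by auto

lemma loopless: assumes "f \<noteq> e" shows "indep B {e}"
proof -
  have "\<exists>C. circuit B C \<and> e \<in> C \<and> f \<in> C" using conn assms unfolding connected_matroid_def by blast
  then obtain C where C: "circuit B C" "e \<in> C" "f \<in> C" by blast
  hence "indep B (C - {f})" unfolding circuit_def by blast
  thus ?thesis using indep_subset[of "C - {f}" "{e}"] C assms by blast
qed

lemma cl_join_flat: "flat B (mcl B X)" by (rule flat_cl)

lemma ac_in_MX:
  assumes T: "T \<subseteq> \<S>" "2 \<le> card T" "\<forall>G\<in>T. \<forall>H\<in>T. G \<subseteq> H \<longrightarrow> G = H"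
    and X: "X = mcl B (\<Union>T)"
  shows "T \<subseteq> MX X"
proof
  fix t assume tT: "t \<in> T"
  have TG: "\<And>s. s \<in> T \<Longrightarrow> s \<in> \<G>" using T S_G by blast
  have TX: "\<And>s. s \<in> T \<Longrightarrow> s \<subseteq> X" using X cl_sub by blast
  have fX: "flat B X" using X flat_cl by simp
  have neX: "X \<noteq> {}" using TX[OF tT] G_ne[OF TG[OF tT]] by blast
  obtain K where K: "K \<in> MX X" "t \<subseteq> K" using exists_MX[OF TG[OF tT] TX[OF tT]] by blast
  define f where "f = restrict (\<lambda>K. mcl B (\<Union>{s\<in>T. s \<subseteq> K})) (MX X)"
  define g where "g = restrict (\<lambda>K. K) (MX X)"
  have fP: "f \<in> PP X" unfolding f_def
  proof (rule PP_I)
    fix K assume K: "K \<in> MX X"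
    have "\<Union>{s\<in>T. s \<subseteq> K} \<subseteq> K" by blast
    hence "mcl B (\<Union>{s\<in>T. s \<subseteq> K}) \<subseteq> K" using cl_flat_sub G_flat[OF MX_G[OF K]] by blast
    thus "flat B (mcl B (\<Union>{s\<in>T. s \<subseteq> K})) \<and> mcl B (\<Union>{s\<in>T. s \<subseteq> K}) \<subseteq> K" using flat_cl by blast
  qed
  have gP: "g \<in> PP X" unfolding g_def
  proof (rule PP_I)
    fix K assume K: "K \<in> MX X"
    show "flat B K \<and> K \<subseteq> K" using G_flat[OF MX_G[OF K]] by simp
  qed
  have "\<Union>(g ` MX X) \<subseteq> X" unfolding g_def using MX_sub by auto
  hence "mcl B (\<Union>(g ` MX X)) \<subseteq> X" using cl_flat_sub fX by blast
  moreover have "X \<subseteq> mcl B (\<Union>(f ` MX X))"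
  proof -
    have UT: "\<Union>T \<subseteq> \<Union>(f ` MX X)"
    proof
      fix x assume "x \<in> \<Union>T"
      then obtain s where s: "s \<in> T" "x \<in> s" by blast
      obtain K' where K': "K' \<in> MX X" "s \<subseteq> K'" using exists_MX[OF TG[OF s(1)] TX[OF s(1)]] by blast
      have "s \<subseteq> \<Union>{s\<in>T. s \<subseteq> K'}" using s K' by blast
      hence "x \<in> mcl B (\<Union>{s\<in>T. s \<subseteq> K'})" using s(2) cl_sub by blast
      moreover have "f K' = mcl B (\<Union>{s\<in>T. s \<subseteq> K'})" unfolding f_def using K'(1) by simp
      ultimately have "x \<in> f K'" by simp
      thus "x \<in> \<Union>(f ` MX X)" using K'(1) by blast
    qed
    show ?thesis using cl_mono[OF UT] X by simp
  qed
  ultimately have "mcl B (\<Union>(g ` MX X)) \<subseteq> mcl B (\<Union>(f ` MX X))" by blast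
  hence "g K \<subseteq> f K" using bs_ord[OF fX neX gP fP] K by blast
  hence KT: "K \<subseteq> mcl B (\<Union>{s\<in>T. s \<subseteq> K})" unfolding f_def g_def using K by simp
  define TK where "TK = {s\<in>T. s \<subseteq> K}"
  have tTK: "t \<in> TK" using tT K TK_def by blast
  have clK: "mcl B (\<Union>TK) = K"
  proof
    show "mcl B (\<Union>TK) \<subseteq> K" by (rule cl_flat_sub) (use TK_def G_flat MX_G K in auto)
    show "K \<subseteq> mcl B (\<Union>TK)" using KT TK_def by simp
  qed
  have "\<not> 2 \<le> card TK"
  proof
    assume "2 \<le> card TK"
    hence "mcl B (\<Union>TK) \<notin> \<G>" using nested_ac[of TK] T TK_def by blast
    thus False using clK MX_G K by simp
  qed
  hence "card TK \<le> 1" by simp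
  hence "\<forall>a\<in>TK. \<forall>b\<in>TK. a = b" using card_le_Suc0_iff_eq[of TK] by simp
  hence "TK = {t}" using tTK by blast
  hence "K = mcl B t" using clK by simp
  also have "... = t" using G_flat[OF TG[OF tT]] unfolding flat_def .
  finally show "t \<in> MX X" using K by simp
qed

end


context bsn
begin

lemma MX_flat: "K \<in> MX X \<Longrightarrow> flat B K" using G_flat MX_G by blast
lemma MX_ne: "K \<in> MX X \<Longrightarrow> K \<noteq> {}" using G_ne MX_G by blast

lemma cl_empty_sub: "flat B K \<Longrightarrow> mcl B {} \<subseteq> K"
  using cl_flat_sub[of "{}" K] by simp

lemma MX_disj:
  assumes X: "flat B X" "X \<noteq> {}" and K: "K1 \<in> MX X" "K2 \<in> MX X" "K1 \<noteq> K2"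
  shows "K1 \<inter> K2 = {}"
proof (rule ccontr)
  assume "K1 \<inter> K2 \<noteq> {}"
  then obtain e where e: "e \<in> K1" "e \<in> K2" by blast
  have ind: "indep B {e}"
  proof (cases "\<exists>f. f \<noteq> e")
    case True then obtain f where "f \<noteq> e" by blast
    thus ?thesis using loopless by blast
  next
    case False
    hence "K1 = {e}" "K2 = {e}" using e by blast+
    thus ?thesis using K by simp
  qed
  define f1 where "f1 = restrict ((\<lambda>K. mcl B {})(K1 := mcl B {e})) (MX X)"
  define f2 where "f2 = restrict ((\<lambda>K. mcl B {})(K2 := mcl B {e})) (MX X)"
  have ee: "mcl B {} \<subseteq> mcl B {e}" by (rule cl_mono) simp
  have fP: "f1 \<in> PP X" unfolding f1_def
  proof (rule PP_I)
    fix K assume K': "K \<in> MX X"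
    have a: "mcl B {} \<subseteq> K" using cl_empty_sub MX_flat[OF K'] by blast
    have b: "K = K1 \<Longrightarrow> mcl B {e} \<subseteq> K" using cl_flat_sub[of "{e}" K] MX_flat[OF K'] e by blast
    show "flat B (((\<lambda>K. mcl B {})(K1 := mcl B {e})) K) \<and> ((\<lambda>K. mcl B {})(K1 := mcl B {e})) K \<subseteq> K"
      using a b flat_cl by auto
  qed
  have gP: "f2 \<in> PP X" unfolding f2_def
  proof (rule PP_I)
    fix K assume K': "K \<in> MX X"
    have a: "mcl B {} \<subseteq> K" using cl_empty_sub MX_flat[OF K'] by blast
    have b: "K = K2 \<Longrightarrow> mcl B {e} \<subseteq> K" using cl_flat_sub[of "{e}" K] MX_flat[OF K'] e by blast
    show "flat B (((\<lambda>K. mcl B {})(K2 := mcl B {e})) K) \<and> ((\<lambda>K. mcl B {})(K2 := mcl B {e})) K \<subseteq> K"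
      using a b flat_cl by auto
  qed
  have u1: "\<Union>(f1 ` MX X) \<subseteq> mcl B {e}" unfolding f1_def using ee by auto
  have u2: "mcl B {e} \<subseteq> \<Union>(f2 ` MX X)"
  proof -
    have "f2 K2 = mcl B {e}" unfolding f2_def using K(2) by simp
    thus ?thesis using K(2) by blast
  qed
  have "\<Union>(f1 ` MX X) \<subseteq> \<Union>(f2 ` MX X)" using u1 u2 by blast
  hence "mcl B (\<Union>(f1 ` MX X)) \<subseteq> mcl B (\<Union>(f2 ` MX X))" by (rule cl_mono)
  hence "f1 K1 \<subseteq> f2 K1" using bs_ord[OF X fP gP] K(1) by blast
  moreover have "f1 K1 = mcl B {e}" unfolding f1_def using K(1) by simp
  moreover have "f2 K1 = mcl B {}" unfolding f2_def using K by simp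
  ultimately have "mcl B {e} \<subseteq> mcl B {}" by simp
  moreover have "e \<in> mcl B {e}" using cl_sub[of "{e}"] by blast
  ultimately have "e \<in> mcl B {}" by blast
  thus False using ind loop_iff by blast
qed

lemma ac_facts:
  assumes T: "T \<subseteq> \<S>" "2 \<le> card T" "\<forall>G\<in>T. \<forall>H\<in>T. G \<subseteq> H \<longrightarrow> G = H"
    and X: "X = mcl B (\<Union>T)"
  shows "flat B X" "X \<noteq> {}" "T \<subseteq> MX X"
proof -
  show fX: "flat B X" using X flat_cl by simp
  have "T \<noteq> {}" using T(2) by auto
  then obtain t where t: "t \<in> T" by blast
  have "t \<noteq> {}" using G_ne t T S_G by blast
  moreover have "t \<subseteq> X" using X t cl_sub[of "\<Union>T"] by blast
  ultimately show "X \<noteq> {}" by blast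
  show "T \<subseteq> MX X" using ac_in_MX[OF T X] .
qed

lemma union_indep:
  assumes T: "T \<subseteq> \<S>" "2 \<le> card T" "\<forall>G\<in>T. \<forall>H\<in>T. G \<subseteq> H \<longrightarrow> G = H"
    and I: "\<And>t. t \<in> T \<Longrightarrow> I t \<subseteq> t \<and> indep B (I t)"
  shows "indep B (\<Union>t\<in>T. I t)"
proof (rule ccontr)
  define X where "X = mcl B (\<Union>T)"
  note XF = ac_facts[OF T X_def]
  assume "\<not> indep B (\<Union>t\<in>T. I t)"
  then obtain C where C: "C \<subseteq> (\<Union>t\<in>T. I t)" "circuit B C" using dep_circuit by blast
  have "C \<noteq> {}" using C(2) indep_empty unfolding circuit_def by blast
  then obtain e where eC: "e \<in> C" by blast
  then obtain t where t: "t \<in> T" "e \<in> I t" using C(1) by blast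
  have tM: "t \<in> MX X" using XF(3) t(1) by blast
  have disj: "\<And>s. s \<in> T \<Longrightarrow> s \<noteq> t \<Longrightarrow> s \<inter> t = {}"
    using MX_disj[OF XF(1,2)] XF(3) tM by blast
  have Ct: "C \<inter> t \<subseteq> I t"
  proof
    fix c assume c: "c \<in> C \<inter> t"
    then obtain s where s: "s \<in> T" "c \<in> I s" using C(1) by blast
    have "c \<in> s" using I[OF s(1)] s(2) by blast
    hence "s = t" using disj[OF s(1)] c by blast
    thus "c \<in> I t" using s by simp
  qed
  have indCt: "indep B (C \<inter> t)" using indep_subset[OF conjunct2[OF I[OF t(1)]] Ct] .
  have eCt: "e \<in> C \<inter> t" using eC t I by blast
  define h where "h = (\<lambda>K. mcl B (C \<inter> K))"
  define f where "f = restrict h (MX X)"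
  define f' where "f' = restrict (h(t := mcl B (C \<inter> t - {e}))) (MX X)"
  have hK: "\<And>K. K \<in> MX X \<Longrightarrow> flat B (h K) \<and> h K \<subseteq> K"
  proof -
    fix K assume K: "K \<in> MX X"
    have "mcl B (C \<inter> K) \<subseteq> K" using cl_flat_sub[of "C \<inter> K" K] MX_flat[OF K] by blast
    thus "flat B (h K) \<and> h K \<subseteq> K" unfolding h_def using flat_cl by blast
  qed
  have fP: "f \<in> PP X" unfolding f_def by (rule PP_I) (rule hK)
  have f'P: "f' \<in> PP X" unfolding f'_def
  proof (rule PP_I)
    fix K assume K: "K \<in> MX X"
    have "mcl B (C \<inter> t - {e}) \<subseteq> t" using cl_flat_sub[of "C \<inter> t - {e}" t] MX_flat[OF tM] by blast
    thus "flat B ((h(t := mcl B (C \<inter> t - {e}))) K) \<and> (h(t := mcl B (C \<inter> t - {e}))) K \<subseteq> K"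
      using hK[OF K] flat_cl by auto
  qed
  have "\<Union>(f ` MX X) \<subseteq> mcl B C"
  proof
    fix x assume "x \<in> \<Union>(f ` MX X)"
    then obtain K where K: "K \<in> MX X" "x \<in> mcl B (C \<inter> K)" unfolding f_def h_def by auto
    have "mcl B (C \<inter> K) \<subseteq> mcl B C" by (rule cl_mono) blast
    thus "x \<in> mcl B C" using K by blast
  qed
  hence j1: "mcl B (\<Union>(f ` MX X)) \<subseteq> mcl B C" using cl_flat_sub flat_cl by blast
  have CU: "C - {e} \<subseteq> \<Union>(f' ` MX X)"
  proof
    fix c assume c: "c \<in> C - {e}"
    then obtain s where s: "s \<in> T" "c \<in> I s" using C(1) by blast
    have cs: "c \<in> s" using I[OF s(1)] s(2) by blast
    have sM: "s \<in> MX X" using XF(3) s(1) by blast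
    have "c \<in> f' s"
    proof (cases "s = t")
      case True
      hence "f' s = mcl B (C \<inter> t - {e})" unfolding f'_def using sM by simp
      moreover have "c \<in> C \<inter> t - {e}" using c cs True by blast
      ultimately show ?thesis using cl_sub[of "C \<inter> t - {e}"] by blast
    next
      case False
      hence "f' s = mcl B (C \<inter> s)" unfolding f'_def h_def using sM by simp
      moreover have "c \<in> C \<inter> s" using c cs by blast
      ultimately show ?thesis using cl_sub[of "C \<inter> s"] by blast
    qed
    thus "c \<in> \<Union>(f' ` MX X)" using sM by blast
  qed
  define J where "J = mcl B (\<Union>(f' ` MX X))"
  have fJ: "flat B J" unfolding J_def by (rule flat_cl)
  have "C - {e} \<subseteq> J" using CU cl_sub[of "\<Union>(f' ` MX X)"] unfolding J_def by blast
  hence "mcl B (C - {e}) \<subseteq> J" using cl_flat_sub fJ by blast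
  hence "e \<in> J" using circuit_cl[OF C(2) eC] by blast
  hence "C \<subseteq> J" using \<open>C - {e} \<subseteq> J\<close> by blast
  hence "mcl B C \<subseteq> J" using cl_flat_sub fJ by blast
  hence "mcl B (\<Union>(f ` MX X)) \<subseteq> mcl B (\<Union>(f' ` MX X))" using j1 unfolding J_def by blast
  hence "f t \<subseteq> f' t" using bs_ord[OF XF(1,2) fP f'P] tM by blast
  moreover have "f t = mcl B (C \<inter> t)" unfolding f_def h_def using tM by simp
  moreover have "f' t = mcl B (C \<inter> t - {e})" unfolding f'_def using tM by simp
  ultimately have "mcl B (C \<inter> t) \<subseteq> mcl B (C \<inter> t - {e})" by simp
  hence "e \<in> mcl B (C \<inter> t - {e})" using eCt cl_sub[of "C \<inter> t"] by blast
  thus False using indep_not_cl[OF indCt eCt] by simp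
qed

lemma laminar:
  assumes "G \<in> \<S>" "H \<in> \<S>" "G \<inter> H \<noteq> {}"
  shows "G \<subseteq> H \<or> H \<subseteq> G"
proof (rule ccontr)
  assume n: "\<not> (G \<subseteq> H \<or> H \<subseteq> G)"
  define T where "T = {G, H}"
  have GH: "G \<noteq> H" using n by blast
  have T: "T \<subseteq> \<S>" "2 \<le> card T" "\<forall>A\<in>T. \<forall>B\<in>T. A \<subseteq> B \<longrightarrow> A = B"
    using assms n GH unfolding T_def by auto
  define X where "X = mcl B (\<Union>T)"
  note XF = ac_facts[OF T X_def]
  have "G \<in> MX X" "H \<in> MX X" using XF(3) T_def by auto
  hence "G \<inter> H = {}" using MX_disj[OF XF(1,2)] GH by blast
  thus False using assms(3) by simp
qed

lemma ac_cover:
  assumes T: "T \<subseteq> \<S>" "2 \<le> card T" "\<forall>G\<in>T. \<forall>H\<in>T. G \<subseteq> H \<longrightarrow> G = H"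
    and x: "x \<in> mcl B (\<Union>T)"
  shows "\<exists>t\<in>T. x \<in> t"
proof -
  define X where "X = mcl B (\<Union>T)"
  note XF = ac_facts[OF T X_def]
  obtain t1 t2 where tt: "t1 \<in> T" "t2 \<in> T" "t1 \<noteq> t2"
    using T(2) by (metis card_le_Suc0_iff_eq finite not_less_eq_eq numeral_2_eq_2)
  have "t1 \<inter> t2 = {}" using MX_disj[OF XF(1,2)] XF(3) tt by blast
  moreover have "t1 \<noteq> {}" "t2 \<noteq> {}" using tt T(1) S_G G_ne by blast+
  moreover obtain a b where "a \<in> t1" "b \<in> t2" using calculation(2,3) by blast
  ultimately have ab: "a \<noteq> b" by blast
  have noloop: "\<And>y. y \<notin> mcl B {}"
  proof -
    fix y
    have "indep B {y}"
    proof (cases "a = y")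
      case True thus ?thesis using loopless[of b y] ab by simp
    next
      case False thus ?thesis using loopless[of a y] by simp
    qed
    thus "y \<notin> mcl B {}" using loop_iff by blast
  qed
  have MT: "MX X \<subseteq> T"
  proof
    fix K assume K: "K \<in> MX X"
    show "K \<in> T"
    proof (rule ccontr)
      assume KT: "K \<notin> T"
      define g where "g = restrict (\<lambda>K. if K \<in> T then K else mcl B {}) (MX X)"
      define h where "h = restrict (\<lambda>K. K) (MX X)"
      have gP: "g \<in> PP X" unfolding g_def
      proof (rule PP_I)
        fix K assume K: "K \<in> MX X"
        show "flat B (if K \<in> T then K else mcl B {}) \<and> (if K \<in> T then K else mcl B {}) \<subseteq> K"
          using MX_flat[OF K] cl_empty_sub[OF MX_flat[OF K]] flat_cl by auto
      qed
      have hP: "h \<in> PP X" unfolding h_def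
      proof (rule PP_I)
        fix K assume K: "K \<in> MX X"
        show "flat B K \<and> K \<subseteq> K" using MX_flat[OF K] by simp
      qed
      have "\<Union>(h ` MX X) \<subseteq> X" unfolding h_def using MX_sub by auto
      hence "mcl B (\<Union>(h ` MX X)) \<subseteq> X" using cl_flat_sub XF(1) by blast
      moreover have "\<Union>T \<subseteq> \<Union>(g ` MX X)"
      proof
        fix y assume "y \<in> \<Union>T"
        then obtain s where s: "s \<in> T" "y \<in> s" by blast
        have sM: "s \<in> MX X" using s XF(3) by blast
        have "g s = s" unfolding g_def using sM s by simp
        thus "y \<in> \<Union>(g ` MX X)" using sM s by blast
      qed
      hence "X \<subseteq> mcl B (\<Union>(g ` MX X))" unfolding X_def by (rule cl_mono)
      ultimately have "mcl B (\<Union>(h ` MX X)) \<subseteq> mcl B (\<Union>(g ` MX X))" by blast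
      hence "h K \<subseteq> g K" using bs_ord[OF XF(1,2) hP gP] K by blast
      hence "K \<subseteq> mcl B {}" unfolding h_def g_def using K KT by simp
      thus False using MX_ne[OF K] noloop by blast
    qed
  qed
  have xX: "x \<in> X" using x X_def by simp
  have "flat B (mcl B {x})" by (rule flat_cl)
  moreover have "mcl B {x} \<subseteq> X" using cl_flat_sub[of "{x}" X] xX XF(1) by blast
  ultimately obtain f where f: "f \<in> PP X" "mcl B (\<Union>(f ` MX X)) = mcl B {x}"
    using bs_surj[OF XF(1,2)] by blast
  have fK: "\<And>K. K \<in> MX X \<Longrightarrow> flat B (f K) \<and> f K \<subseteq> K" using f(1) unfolding PP_def by auto
  show ?thesis
  proof (cases "\<exists>K\<in>MX X. x \<in> f K")
    case True
    then obtain K where "K \<in> MX X" "x \<in> f K" by blast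
    thus ?thesis using fK MT by blast
  next
    case False
    have "\<Union>(f ` MX X) \<subseteq> mcl B {}"
    proof
      fix y assume "y \<in> \<Union>(f ` MX X)"
      then obtain K where K: "K \<in> MX X" "y \<in> f K" by blast
      have "y \<in> mcl B {x}" using K f(2) cl_sub[of "\<Union>(f ` MX X)"] by blast
      show "y \<in> mcl B {}"
      proof (rule ccontr)
        assume yl: "y \<notin> mcl B {}"
        have r1: "mrank B (insert y {x}) = mrank B {x}" using \<open>y \<in> mcl B {x}\<close> mcl_iff by blast
        have r2: "mrank B {y} \<noteq> 0" using yl mcl_iff[of y "{}"] rank_empty by simp
        have r3: "mrank B {x} \<le> 1" using rank_le_card[of "{x}"] by simp
        have r4: "mrank B {y} \<le> mrank B (insert x {y})" by (rule rank_mono) blast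
        have "insert x {y} = insert y {x}" by blast
        hence "mrank B (insert x {y}) = mrank B {y}" using r1 r2 r3 r4 by simp
        hence "x \<in> mcl B {y}" using mcl_iff by blast
        moreover have "mcl B {y} \<subseteq> f K" using cl_flat_sub[of "{y}" "f K"] K fK by blast
        ultimately show False using False K by blast
      qed
    qed
    hence "mcl B (\<Union>(f ` MX X)) \<subseteq> mcl B {}" using cl_flat_sub flat_cl by blast
    hence "x \<in> mcl B {}" using f(2) cl_sub[of "{x}"] by blast
    thus ?thesis using noloop by blast
  qed
qed

end


context bsn
begin

definition ch :: "'a set \<Rightarrow> 'a set set" where
  "ch G = maximal_in {H\<in>\<S>. H \<subset> G}"

abbreviation Gm :: "'a set \<Rightarrow> 'a set" where
  "Gm G \<equiv> G_minus B \<S> G"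

lemma Gm_cases: "Gm G = (if {H\<in>\<S>. H \<subset> G} = {} then {} else mcl B (\<Union>(ch G)))"
  unfolding G_minus_def Let_def flat_join_def ch_def by simp

lemma Gm_ne: assumes "{H\<in>\<S>. H \<subset> G} \<noteq> {}" shows "Gm G = mcl B (\<Union>(ch G))"
proof -
  have "Gm G = (if {H\<in>\<S>. H \<subset> G} = {} then {} else mcl B (\<Union>(ch G)))" by (rule Gm_cases)
  also have "... = mcl B (\<Union>(ch G))" using assms by (rule if_not_P)
  finally show ?thesis .
qed

lemma Gm_em: assumes "{H\<in>\<S>. H \<subset> G} = {}" shows "Gm G = {}"
  using Gm_cases[of G] assms by simp

lemma ch_in: "H \<in> ch G \<Longrightarrow> H \<in> \<S> \<and> H \<subset> G"
  unfolding ch_def maximal_in_def by blast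

lemma ch_ac: "\<forall>A\<in>ch G. \<forall>C\<in>ch G. A \<subseteq> C \<longrightarrow> A = C"
  unfolding ch_def maximal_in_def by blast

lemma ch_above: assumes "K \<in> \<S>" "K \<subset> G" shows "\<exists>H\<in>ch G. K \<subseteq> H"
proof -
  have "finite {H\<in>\<S>. H \<subset> G}" by simp
  from finite_has_maximal2[OF this, of K] assms
  obtain H where H: "H \<in> {H\<in>\<S>. H \<subset> G}" "K \<subseteq> H" "\<forall>b\<in>{H\<in>\<S>. H \<subset> G}. H \<subseteq> b \<longrightarrow> H = b" by auto
  have "H \<in> ch G" unfolding ch_def maximal_in_def using H by blast
  thus ?thesis using H by blast
qed

lemma S_flat: "G \<in> \<S> \<Longrightarrow> flat B G" using S_G G_flat by blast

lemma Gm_sub: assumes "G \<in> \<S>" shows "Gm G \<subseteq> G"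
proof (cases "{H\<in>\<S>. H \<subset> G} = {}")
  case True thus ?thesis using Gm_em by simp
next
  case False
  have "\<Union>(ch G) \<subseteq> G" using ch_in by blast
  hence "mcl B (\<Union>(ch G)) \<subseteq> G" using cl_flat_sub S_flat[OF assms] by blast
  thus ?thesis using Gm_ne[OF False] by simp
qed

lemma ch_Gm: assumes "H \<in> ch G" shows "H \<subseteq> Gm G"
proof -
  have "{H\<in>\<S>. H \<subset> G} \<noteq> {}" using ch_in[OF assms] by blast
  hence "Gm G = mcl B (\<Union>(ch G))" by (rule Gm_ne)
  moreover have "H \<subseteq> \<Union>(ch G)" using assms by blast
  ultimately show ?thesis using cl_sub[of "\<Union>(ch G)"] by blast
qed

lemma sub_Gm: assumes "K \<in> \<S>" "K \<subset> G" shows "K \<subseteq> Gm G"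
  using ch_above[OF assms] ch_Gm by blast

lemma ch_card_cases:
  assumes "{H\<in>\<S>. H \<subset> G} \<noteq> {}"
  shows "(\<exists>H. ch G = {H}) \<or> 2 \<le> card (ch G)"
proof -
  obtain K where "K \<in> \<S>" "K \<subset> G" using assms by blast
  then obtain H where H: "H \<in> ch G" using ch_above by blast
  show ?thesis
  proof (cases "2 \<le> card (ch G)")
    case False
    hence "card (ch G) \<le> 1" by simp
    hence "\<forall>a\<in>ch G. \<forall>b\<in>ch G. a = b" using card_le_Suc0_iff_eq[of "ch G"] by simp
    hence "ch G = {H}" using H by blast
    thus ?thesis by blast
  qed simp
qed

lemma ch_S: "ch G \<subseteq> \<S>" using ch_in by blast

lemma Gm_children: assumes "G \<in> \<S>" shows "Gm G \<subseteq> \<Union>(ch G)"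
proof (cases "{H\<in>\<S>. H \<subset> G} = {}")
  case True thus ?thesis using Gm_em by simp
next
  case False
  hence Gm: "Gm G = mcl B (\<Union>(ch G))" by (rule Gm_ne)
  from ch_card_cases[OF False] show ?thesis
  proof
    assume "\<exists>H. ch G = {H}"
    then obtain H where H: "ch G = {H}" by blast
    have "H \<in> \<S>" using ch_in H by blast
    hence "mcl B H = H" using S_flat unfolding flat_def by blast
    thus ?thesis using Gm H by simp
  next
    assume c: "2 \<le> card (ch G)"
    show ?thesis
    proof
      fix x assume "x \<in> Gm G"
      hence "x \<in> mcl B (\<Union>(ch G))" using Gm by simp
      thus "x \<in> \<Union>(ch G)" using ac_cover[OF ch_S c ch_ac] by blast
    qed
  qed
qed

lemma pieces_disj:
  assumes "G \<in> \<S>" "H \<in> \<S>" "G \<noteq> H"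
  shows "(G - Gm G) \<inter> (H - Gm H) = {}"
proof (rule ccontr)
  assume "(G - Gm G) \<inter> (H - Gm H) \<noteq> {}"
  then obtain x where x: "x \<in> G" "x \<notin> Gm G" "x \<in> H" "x \<notin> Gm H" by blast
  have "G \<subseteq> H \<or> H \<subseteq> G" using laminar[OF assms(1,2)] x by blast
  thus False
  proof
    assume "G \<subseteq> H" hence "G \<subset> H" using assms by blast
    hence "G \<subseteq> Gm H" using sub_Gm assms by blast
    thus False using x by blast
  next
    assume "H \<subseteq> G" hence "H \<subset> G" using assms by blast
    hence "H \<subseteq> Gm G" using sub_Gm assms by blast
    thus False using x by blast
  qed
qed

lemma pieces_cover:
  assumes U: "UNIV \<in> \<S>"
  shows "(\<Union>G\<in>\<S>. G - Gm G) = UNIV"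
proof -
  have "x \<in> (\<Union>G\<in>\<S>. G - Gm G)" for x
  proof -
    have "finite {G\<in>\<S>. x \<in> G}" by simp
    from finite_has_minimal2[OF this, of UNIV] U
    obtain G where G: "G \<in> \<S>" "x \<in> G" "\<forall>b\<in>{G\<in>\<S>. x \<in> G}. b \<subseteq> G \<longrightarrow> G = b" by auto
    have "x \<notin> Gm G"
    proof
      assume "x \<in> Gm G"
      then obtain H where H: "H \<in> ch G" "x \<in> H" using Gm_children[OF G(1)] by blast
      have "H \<in> \<S>" "H \<subset> G" using ch_in[OF H(1)] by auto
      thus False using G(3) H(2) by blast
    qed
    thus ?thesis using G by blast
  qed
  thus ?thesis by blast
qed

lemma children_indep:
  assumes "\<And>H. H \<in> ch G \<Longrightarrow> I H \<subseteq> H \<and> indep B (I H)"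
  shows "indep B (\<Union>H\<in>ch G. I H)"
proof (cases "{H\<in>\<S>. H \<subset> G} = {}")
  case True
  hence "ch G = {}" using ch_in by blast
  thus ?thesis using indep_empty by simp
next
  case False
  from ch_card_cases[OF False] show ?thesis
  proof
    assume "\<exists>H. ch G = {H}"
    then obtain H where H: "ch G = {H}" by blast
    thus ?thesis using assms[of H] by simp
  next
    assume c: "2 \<le> card (ch G)"
    show ?thesis by (rule union_indep[OF ch_S c ch_ac]) (rule assms)
  qed
qed

lemma Gm_span:
  assumes "\<And>H. H \<in> ch G \<Longrightarrow> H \<subseteq> mcl B J"
  shows "Gm G \<subseteq> mcl B J"
proof (cases "{H\<in>\<S>. H \<subset> G} = {}")
  case True thus ?thesis using Gm_em by simp
next
  case False
  have "\<Union>(ch G) \<subseteq> mcl B J" using assms by blast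
  hence "mcl B (\<Union>(ch G)) \<subseteq> mcl B J" by (rule cl_span)
  thus ?thesis using Gm_ne[OF False] by simp
qed

lemma minor_basesE:
  assumes "b \<in> minor_bases B F G"
  obtains \<tau> \<sigma> where "b = \<tau> - F" "max_indep_in B G \<tau>" "max_indep_in B F \<sigma>" "\<sigma> \<subseteq> \<tau>"
  using assms unfolding minor_bases_def by blast

lemma minor_basesI:
  assumes "max_indep_in B G \<tau>" "max_indep_in B F \<sigma>" "\<sigma> \<subseteq> \<tau>"
  shows "\<tau> - F \<in> minor_bases B F G"
  using assms unfolding minor_bases_def by blast

lemma minor_exists: assumes "G \<in> \<S>" shows "\<exists>b. b \<in> minor_bases B (Gm G) G"
proof -
  obtain s where s: "max_indep_in B (Gm G) s" using max_indep_exists by blast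
  have "s \<subseteq> G" using max_indepD(1)[OF s] Gm_sub[OF assms] by blast
  then obtain t where t: "s \<subseteq> t" "max_indep_in B G t" using extend_max max_indepD(2)[OF s] by blast
  show ?thesis using minor_basesI[OF t(2) s t(1)] by blast
qed

lemma good_from_minors:
  assumes b: "\<forall>G\<in>\<S>. b G \<in> minor_bases B (Gm G) G"
  shows "G \<in> \<S> \<Longrightarrow> max_indep_in B G ((\<Union>K\<in>\<S>. b K) \<inter> G)"
proof -
  define \<sigma> where "\<sigma> = (\<Union>K\<in>\<S>. b K)"
  have bsub: "\<And>K. K \<in> \<S> \<Longrightarrow> b K \<subseteq> K - Gm K"
  proof -
    fix K assume K: "K \<in> \<S>"
    obtain \<tau> s where "b K = \<tau> - Gm K" "max_indep_in B K \<tau>" using minor_basesE[OF b[rule_format, OF K]] by metis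
    thus "b K \<subseteq> K - Gm K" using max_indepD(1) by blast
  qed
  have fin: "finite G" by simp
  have "G \<in> \<S> \<Longrightarrow> max_indep_in B G (\<sigma> \<inter> G)"
    using fin
  proof (induction G rule: finite_psubset_induct)
    case (psubset G)
    have GS: "G \<in> \<S>" by fact
    obtain \<tau> s where tb: "b G = \<tau> - Gm G" and tau: "max_indep_in B G \<tau>"
      and s: "max_indep_in B (Gm G) s" and st: "s \<subseteq> \<tau>"
      using minor_basesE[OF b[rule_format, OF GS]] by metis
    define I where "I = (\<Union>H\<in>ch G. \<sigma> \<inter> H)"
    have IH: "\<And>H. H \<in> ch G \<Longrightarrow> max_indep_in B H (\<sigma> \<inter> H)"
      using psubset.IH ch_in by blast
    have indI: "indep B I" unfolding I_def
      by (rule children_indep) (use IH max_indepD in blast)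
    have IGm: "I \<subseteq> Gm G" unfolding I_def using ch_Gm by blast
    have GmI: "Gm G \<subseteq> mcl B I"
    proof (rule Gm_span)
      fix H assume H: "H \<in> ch G"
      have "H \<subseteq> mcl B (\<sigma> \<inter> H)" using max_indep_spans[OF IH[OF H]] .
      moreover have "mcl B (\<sigma> \<inter> H) \<subseteq> mcl B I" by (rule cl_mono) (use H I_def in blast)
      ultimately show "H \<subseteq> mcl B I" by blast
    qed
    have mI: "max_indep_in B (Gm G) I" by (rule spanning_max_indep[OF indI IGm GmI])
    have m: "max_indep_in B G ((\<tau> - Gm G) \<union> I)"
      by (rule contraction[OF Gm_sub[OF GS] tau s st mI])
    have eq: "\<sigma> \<inter> G = b G \<union> I"
    proof
      show "\<sigma> \<inter> G \<subseteq> b G \<union> I"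
      proof
        fix x assume x: "x \<in> \<sigma> \<inter> G"
        then obtain K where K: "K \<in> \<S>" "x \<in> b K" unfolding \<sigma>_def by blast
        have xK: "x \<in> K" "x \<notin> Gm K" using bsub[OF K(1)] K(2) by blast+
        have "K \<subseteq> G \<or> G \<subseteq> K" using laminar[OF K(1) GS] x xK by blast
        thus "x \<in> b G \<union> I"
        proof
          assume KG: "K \<subseteq> G"
          show ?thesis
          proof (cases "K = G")
            case True thus ?thesis using K by simp
          next
            case False
            hence "K \<subset> G" using KG by blast
            then obtain H where H: "H \<in> ch G" "K \<subseteq> H" using ch_above K(1) by blast
            hence "x \<in> \<sigma> \<inter> H" using x xK by blast
            thus ?thesis unfolding I_def using H by blast
          qed
        next
          assume GK: "G \<subseteq> K"
          show ?thesis
          proof (cases "K = G")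
            case True thus ?thesis using K by simp
          next
            case False
            hence "G \<subset> K" using GK by blast
            hence "G \<subseteq> Gm K" using sub_Gm GS K(1) by blast
            thus ?thesis using x xK by blast
          qed
        qed
      qed
    next
      have "b G \<subseteq> \<sigma>" unfolding \<sigma>_def using GS by blast
      moreover have "b G \<subseteq> G" using bsub[OF GS] by blast
      moreover have "I \<subseteq> \<sigma> \<inter> G" unfolding I_def using ch_in by blast
      ultimately show "b G \<union> I \<subseteq> \<sigma> \<inter> G" by blast
    qed
    show ?case using m unfolding eq tb .
  qed
  thus "G \<in> \<S> \<Longrightarrow> max_indep_in B G ((\<Union>K\<in>\<S>. b K) \<inter> G)" unfolding \<sigma>_def .
qed

lemma minors_from_good:
  assumes g: "\<forall>G\<in>\<S>. max_indep_in B G (\<sigma> \<inter> G)" and GS: "G \<in> \<S>"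
  shows "\<sigma> \<inter> (G - Gm G) \<in> minor_bases B (Gm G) G"
proof -
  have tau: "max_indep_in B G (\<sigma> \<inter> G)" using g GS by blast
  have "indep B (\<sigma> \<inter> Gm G)" using indep_subset[OF max_indepD(2)[OF tau]] Gm_sub[OF GS] by blast
  moreover have "\<sigma> \<inter> Gm G \<subseteq> Gm G" by blast
  moreover have "Gm G \<subseteq> mcl B (\<sigma> \<inter> Gm G)"
  proof (rule Gm_span)
    fix H assume H: "H \<in> ch G"
    have HS: "H \<in> \<S>" using ch_in H by blast
    have "H \<subseteq> mcl B (\<sigma> \<inter> H)" using max_indep_spans g HS by blast
    moreover have "mcl B (\<sigma> \<inter> H) \<subseteq> mcl B (\<sigma> \<inter> Gm G)" by (rule cl_mono) (use ch_Gm[OF H] in blast)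
    ultimately show "H \<subseteq> mcl B (\<sigma> \<inter> Gm G)" by blast
  qed
  ultimately have s: "max_indep_in B (Gm G) (\<sigma> \<inter> Gm G)" by (rule spanning_max_indep)
  have st: "\<sigma> \<inter> Gm G \<subseteq> \<sigma> \<inter> G" using Gm_sub[OF GS] by blast
  have "(\<sigma> \<inter> G) - Gm G \<in> minor_bases B (Gm G) G" by (rule minor_basesI[OF tau s st])
  moreover have "(\<sigma> \<inter> G) - Gm G = \<sigma> \<inter> (G - Gm G)" by blast
  ultimately show ?thesis by simp
qed

end


lemma incvec_inj: "inj_on incvec S"
proof
  fix G H :: "'a::finite set" assume "incvec G = incvec H"
  hence "\<forall>i. incvec G $ i = incvec H $ i" by simp
  hence a: "\<forall>i. (if i \<in> G then 1 else 0::real) = (if i \<in> H then 1 else 0)" unfolding incvec_def by simp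
  show "G = H"
  proof (rule set_eqI)
    fix x show "(x \<in> G) = (x \<in> H)" using spec[OF a, of x] by (auto split: if_splits)
  qed
qed

lemma pos_coeffs:
  fixes S :: "'a::finite set set" and w :: "real^'a"
  assumes w: "w \<in> rel_interior (nonneg_cone (incvec ` S))"
  shows "\<exists>c. (\<forall>G\<in>S. c G > 0) \<and> w = (\<Sum>G\<in>S. c G *\<^sub>R incvec G)"
proof -
  define V where "V = incvec ` S"
  define C where "C = nonneg_cone V"
  define p where "p = (\<Sum>v\<in>V. v)"
  have pC: "p \<in> C" unfolding C_def nonneg_cone_def p_def
    by (rule CollectI, rule exI[of _ "\<lambda>_. 1"]) simp
  have wC: "w \<in> C" and "\<exists>e. e > 0 \<and> ball w e \<inter> affine hull C \<subseteq> C"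
    using w unfolding C_def V_def mem_rel_interior_ball by blast+
  then obtain e where e: "e > 0" "ball w e \<inter> affine hull C \<subseteq> C" by blast
  define t where "t = e / (2 * (norm (w - p) + 1))"
  have n0: "0 \<le> norm (w - p)" by simp
  have n1: "0 < 2 * (norm (w - p) + 1)" using n0 by (smt (verit))
  have t0: "t > 0" unfolding t_def using e(1) n1 by (rule divide_pos_pos)
  define y where "y = (1 + t) *\<^sub>R w + (- t) *\<^sub>R p"
  have "y \<in> affine hull C"
  proof -
    have "w \<in> affine hull C" "p \<in> affine hull C" using wC pC hull_subset[of C affine] by blast+
    thus ?thesis unfolding y_def by (intro mem_affine[OF affine_affine_hull]) simp_all
  qed
  moreover have "y \<in> ball w e"
  proof -
    have "w - y = t *\<^sub>R (p - w)" unfolding y_def by (simp add: algebra_simps)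
    hence "dist w y = t * norm (w - p)" using t0 by (simp add: dist_norm norm_minus_commute)
    also have "... < e"
    proof -
      have "t * norm (w - p) = e * (norm (w - p) / (2 * (norm (w - p) + 1)))" unfolding t_def by simp
      also have "... < e * 1"
      proof (rule mult_strict_left_mono)
        have "norm (w - p) < 1 * (2 * (norm (w - p) + 1))" using n0 by (smt (verit))
        thus "norm (w - p) / (2 * (norm (w - p) + 1)) < 1" using n1 by (subst pos_divide_less_eq) auto
      qed (use e in simp)
      finally show ?thesis by simp
    qed
    finally show ?thesis by simp
  qed
  ultimately have "y \<in> C" using e by blast
  then obtain d where d: "\<forall>v\<in>V. 0 \<le> d v" "y = (\<Sum>v\<in>V. d v *\<^sub>R v)"
    unfolding C_def nonneg_cone_def by blast
  have "(1 + t) *\<^sub>R w = y + t *\<^sub>R p" unfolding y_def by (simp add: algebra_simps)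
  also have "... = (\<Sum>v\<in>V. (d v + t) *\<^sub>R v)"
    unfolding d(2) p_def by (simp add: scaleR_add_left sum.distrib scaleR_sum_right)
  finally have eq1: "(1 + t) *\<^sub>R w = (\<Sum>v\<in>V. (d v + t) *\<^sub>R v)" .
  have "w = (1 / (1 + t)) *\<^sub>R ((1 + t) *\<^sub>R w)" using t0 by simp
  also have "... = (1 / (1 + t)) *\<^sub>R (\<Sum>v\<in>V. (d v + t) *\<^sub>R v)" unfolding eq1 ..
  also have "... = (\<Sum>v\<in>V. ((d v + t) / (1 + t)) *\<^sub>R v)"
    by (simp add: scaleR_sum_right)
  also have "... = (\<Sum>G\<in>S. ((d (incvec G) + t) / (1 + t)) *\<^sub>R incvec G)"
    unfolding V_def by (rule sum.reindex[OF incvec_inj, unfolded comp_def])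
  finally have weq: "w = (\<Sum>G\<in>S. ((d (incvec G) + t) / (1 + t)) *\<^sub>R incvec G)" .
  have "\<forall>G\<in>S. (d (incvec G) + t) / (1 + t) > 0"
    using d(1) t0 unfolding V_def by (simp add: add_nonneg_pos)
  thus ?thesis using weq by (intro exI[of _ "\<lambda>G. (d (incvec G) + t) / (1 + t)"]) simp
qed

lemma weight_eq:
  fixes S :: "'a::finite set set" and w :: "real^'a"
  assumes "w = (\<Sum>G\<in>S. c G *\<^sub>R incvec G)"
  shows "(\<Sum>i\<in>\<sigma>. w $ i) = (\<Sum>G\<in>S. c G * real (card (\<sigma> \<inter> G)))"
proof -
  have "\<And>i. w $ i = (\<Sum>G\<in>S. c G * (if i \<in> G then 1 else 0))"
    using assms by (simp add: incvec_def)
  hence "(\<Sum>i\<in>\<sigma>. w $ i) = (\<Sum>i\<in>\<sigma>. \<Sum>G\<in>S. c G * (if i \<in> G then 1 else 0))" by simp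
  also have "... = (\<Sum>G\<in>S. \<Sum>i\<in>\<sigma>. c G * (if i \<in> G then 1 else 0))" by (rule sum.swap)
  also have "... = (\<Sum>G\<in>S. c G * real (card (\<sigma> \<inter> G)))"
  proof (rule sum.cong[OF refl])
    fix G
    have "(\<Sum>i\<in>\<sigma>. c G * (if i \<in> G then 1 else 0)) = c G * (\<Sum>i\<in>\<sigma>. (if i \<in> G then 1 else 0))"
      by (simp add: sum_distrib_left)
    also have "(\<Sum>i\<in>\<sigma>. (if i \<in> G then 1 else 0)) = (\<Sum>i\<in>{x\<in>\<sigma>. x \<in> G}. (1::real))"
      by (rule sum.inter_filter[symmetric]) simp
    also have "... = real (card {x\<in>\<sigma>. x \<in> G})" by simp
    also have "{x\<in>\<sigma>. x \<in> G} = \<sigma> \<inter> G" by blast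
    finally show "(\<Sum>i\<in>\<sigma>. c G * (if i \<in> G then 1 else 0)) = c G * real (card (\<sigma> \<inter> G))" .
  qed
  finally show ?thesis .
qed

context mat
begin
lemma max_indep_UNIV: assumes "max_indep_in B UNIV I" shows "I \<in> B"
proof -
  obtain b where b: "b \<in> B" "I \<subseteq> b" using max_indepD(2)[OF assms] unfolding indep_def by blast
  have "\<not> I \<subset> b" using max_indepD(3)[OF assms, of b] base_indep[OF b(1)] by blast
  hence "I = b" using b by blast
  thus ?thesis using b by simp
qed
end



theorem theorem4p4:
  fixes B :: "'a::finite set set" and \<G> \<S> :: "'a set set" and w :: "real^'a"
  assumes "matroid_bases B"
    and "connected_matroid B"
    and "building_set B \<G>"
    and "nested B \<G> \<S>"
    and "UNIV \<in> \<S>"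
    and "w \<in> rel_interior (nonneg_cone (incvec ` \<S>))"
  shows "is_direct_sum (weight_bases B w) \<S> (\<lambda>G. G - G_minus B \<S> G)
           (\<lambda>G. minor_bases B (G_minus B \<S> G) G)"
proof -
  interpret bsn B \<G> \<S>
    using assms(1-4) by (simp add: bsn_def mat_def bsn_axioms_def)
  obtain c where c: "\<forall>G\<in>\<S>. c G > 0" "w = (\<Sum>G\<in>\<S>. c G *\<^sub>R incvec G)"
    using pos_coeffs[OF assms(6)] by blast
  define wt where "wt \<sigma> = (\<Sum>i\<in>\<sigma>. w $ i)" for \<sigma> :: "'a set"
  have wt: "\<And>\<sigma>. wt \<sigma> = (\<Sum>G\<in>\<S>. c G * real (card (\<sigma> \<inter> G)))"
    unfolding wt_def by (rule weight_eq[OF c(2)])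
  define R where "R = (\<Sum>G\<in>\<S>. c G * real (mrank B G))"
  define good where "good \<sigma> \<longleftrightarrow> \<sigma> \<in> B \<and> (\<forall>G\<in>\<S>. max_indep_in B G (\<sigma> \<inter> G))" for \<sigma>
  have cardle: "\<And>\<sigma> G. \<sigma> \<in> B \<Longrightarrow> card (\<sigma> \<inter> G) \<le> mrank B G"
  proof -
    fix \<sigma> G assume "\<sigma> \<in> B"
    hence "indep B (\<sigma> \<inter> G)" using base_indep indep_subset by blast
    thus "card (\<sigma> \<inter> G) \<le> mrank B G" using rank_ge by blast
  qed
  have le: "\<And>\<sigma>. \<sigma> \<in> B \<Longrightarrow> wt \<sigma> \<le> R"
    unfolding wt R_def
  proof (rule sum_mono)
    fix \<sigma> G assume s: "\<sigma> \<in> B" and G: "G \<in> \<S>"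
    have "real (card (\<sigma> \<inter> G)) \<le> real (mrank B G)" using cardle[OF s] by simp
    thus "c G * real (card (\<sigma> \<inter> G)) \<le> c G * real (mrank B G)"
      using c(1) G by (intro mult_left_mono) auto
  qed
  have goodR: "\<And>\<sigma>. good \<sigma> \<Longrightarrow> wt \<sigma> = R"
  proof -
    fix \<sigma> assume "good \<sigma>"
    hence "\<forall>G\<in>\<S>. card (\<sigma> \<inter> G) = mrank B G" unfolding good_def using max_indep_card by blast
    thus "wt \<sigma> = R" unfolding wt R_def by simp
  qed
  have from_minors: "\<And>b. \<forall>G\<in>\<S>. b G \<in> minor_bases B (Gm G) G \<Longrightarrow> good (\<Union>G\<in>\<S>. b G)"
  proof -
    fix b assume b: "\<forall>G\<in>\<S>. b G \<in> minor_bases B (Gm G) G"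
    have g: "\<forall>G\<in>\<S>. max_indep_in B G ((\<Union>K\<in>\<S>. b K) \<inter> G)" using good_from_minors[OF b] by blast
    hence "max_indep_in B UNIV ((\<Union>K\<in>\<S>. b K) \<inter> UNIV)" using assms(5) by blast
    hence "(\<Union>K\<in>\<S>. b K) \<in> B" using max_indep_UNIV by simp
    thus "good (\<Union>G\<in>\<S>. b G)" unfolding good_def using g by blast
  qed
  define b0 where "b0 G = (SOME b. b \<in> minor_bases B (Gm G) G)" for G
  have "\<forall>G\<in>\<S>. b0 G \<in> minor_bases B (Gm G) G"
    unfolding b0_def using minor_exists someI_ex by metis
  then obtain \<sigma>0 where s0: "good \<sigma>0" using from_minors by blast
  have WB: "weight_bases B w = {\<sigma>. good \<sigma>}"
  proof
    show "weight_bases B w \<subseteq> {\<sigma>. good \<sigma>}"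
    proof
      fix \<sigma> assume "\<sigma> \<in> weight_bases B w"
      hence s: "\<sigma> \<in> B" "\<forall>b'\<in>B. wt b' \<le> wt \<sigma>" unfolding weight_bases_def wt_def by auto
      have "wt \<sigma>0 \<le> wt \<sigma>" using s s0 unfolding good_def by blast
      hence "wt \<sigma> = R" using le[OF s(1)] goodR[OF s0] by simp
      hence sz: "(\<Sum>G\<in>\<S>. c G * (real (mrank B G) - real (card (\<sigma> \<inter> G)))) = 0"
        unfolding wt R_def by (simp add: right_diff_distrib sum_subtractf)
      have nn: "\<And>G. G \<in> \<S> \<Longrightarrow> 0 \<le> c G * (real (mrank B G) - real (card (\<sigma> \<inter> G)))"
        using c(1) cardle[OF s(1)] by (simp add: less_imp_le)
      have iff: "(\<Sum>G\<in>\<S>. c G * (real (mrank B G) - real (card (\<sigma> \<inter> G)))) = 0 \<longleftrightarrow>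
          (\<forall>G\<in>\<S>. c G * (real (mrank B G) - real (card (\<sigma> \<inter> G))) = 0)"
        by (rule sum_nonneg_eq_0_iff) (use nn in auto)
      have "\<forall>G\<in>\<S>. c G * (real (mrank B G) - real (card (\<sigma> \<inter> G))) = 0" using iff sz by blast
      hence z: "\<And>G. G \<in> \<S> \<Longrightarrow> c G * (real (mrank B G) - real (card (\<sigma> \<inter> G))) = 0" by blast
      have "\<forall>G\<in>\<S>. card (\<sigma> \<inter> G) = mrank B G"
      proof
        fix G assume G: "G \<in> \<S>"
        have "c G \<noteq> 0" using c(1) G by force
        hence "real (mrank B G) - real (card (\<sigma> \<inter> G)) = 0" using z[OF G] by simp
        thus "card (\<sigma> \<inter> G) = mrank B G" by simp
      qed
      moreover have "\<And>G. indep B (\<sigma> \<inter> G)" using s(1) base_indep indep_subset by blast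
      ultimately have "\<forall>G\<in>\<S>. max_indep_in B G (\<sigma> \<inter> G)" using max_indep_iff by blast
      thus "\<sigma> \<in> {\<sigma>. good \<sigma>}" using s(1) unfolding good_def by blast
    qed
  next
    show "{\<sigma>. good \<sigma>} \<subseteq> weight_bases B w"
    proof
      fix \<sigma> assume "\<sigma> \<in> {\<sigma>. good \<sigma>}"
      hence g: "good \<sigma>" by simp
      have "\<forall>b'\<in>B. wt b' \<le> wt \<sigma>" using le goodR[OF g] by simp
      thus "\<sigma> \<in> weight_bases B w" using g unfolding good_def weight_bases_def wt_def by blast
    qed
  qed
  have eqS: "{\<sigma>. good \<sigma>} = {\<Union>i\<in>\<S>. b i | b. \<forall>i\<in>\<S>. b i \<in> minor_bases B (Gm i) i}"
  proof
    show "{\<sigma>. good \<sigma>} \<subseteq> {\<Union>i\<in>\<S>. b i | b. \<forall>i\<in>\<S>. b i \<in> minor_bases B (Gm i) i}"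
    proof
      fix \<sigma> assume "\<sigma> \<in> {\<sigma>. good \<sigma>}"
      hence g: "\<forall>G\<in>\<S>. max_indep_in B G (\<sigma> \<inter> G)" unfolding good_def by blast
      have m: "\<forall>i\<in>\<S>. \<sigma> \<inter> (i - Gm i) \<in> minor_bases B (Gm i) i" using minors_from_good[OF g] by blast
      have "(\<Union>i\<in>\<S>. \<sigma> \<inter> (i - Gm i)) = \<sigma> \<inter> (\<Union>i\<in>\<S>. i - Gm i)" by blast
      also have "... = \<sigma>" using pieces_cover[OF assms(5)] by simp
      finally show "\<sigma> \<in> {\<Union>i\<in>\<S>. b i | b. \<forall>i\<in>\<S>. b i \<in> minor_bases B (Gm i) i}"
        using m by (intro CollectI exI[of _ "\<lambda>i. \<sigma> \<inter> (i - Gm i)"]) simp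
    qed
  next
    show "{\<Union>i\<in>\<S>. b i | b. \<forall>i\<in>\<S>. b i \<in> minor_bases B (Gm i) i} \<subseteq> {\<sigma>. good \<sigma>}"
      using from_minors by blast
  qed
  show ?thesis unfolding is_direct_sum_def
  proof (intro conjI)
    show "\<forall>i\<in>\<S>. \<forall>j\<in>\<S>. i \<noteq> j \<longrightarrow> (i - Gm i) \<inter> (j - Gm j) = {}" using pieces_disj by blast
    show "(\<Union>i\<in>\<S>. i - Gm i) = UNIV" by (rule pieces_cover[OF assms(5)])
    show "weight_bases B w = {\<Union>i\<in>\<S>. b i | b. \<forall>i\<in>\<S>. b i \<in> minor_bases B (Gm i) i}"
      using WB eqS by simp
  qed
qed


end
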